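(* Let $X$ be a separable topological space, let $T$ be a discrete space with Alexandroff compactification $Y=\alpha T=T\cup\{\infty\}$, and let $f:X\times Y\to\mathbb R$ be a separately continuous function. Then $(\wedge_f,\vee_f)$ is a stable pair of Hahn on $X$.
   Context: In $\alpha T$ the points of $T$ are isolated and neighbourhoods of $\infty$ are complements of finite subsets of $T$. $\wedge_f(x)=\inf_{y\in Y}f(x,y)$, $\vee_f(x)=\sup_{y\in Y}f(x,y)$. A pair $(g,h)$ of functions $X\to\overline{\mathbb R}$ is a stable pair of Hahn if there are continuous $u_n:X\to\overline{\mathbb R}$ with $g(x)=\min_{n\in\mathbb N}u_n(x)$ and $h(x)=\max_{n\in\mathbb N}u_n(x)$ for all $x\in X$ (attained). *)

theory Defs
  imports "HOL-Analysis.Analysis"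
begin

text \<open>Alexandroff (one-point) compactification of the discrete space with carrier T.
  Points of T are represented as Some t, the point at infinity as None.\<close>

definition alex_open :: "'b set \<Rightarrow> 'b option set \<Rightarrow> bool" where
  "alex_open T U \<longleftrightarrow> U \<subseteq> insert None (Some ` T) \<and>
      (None \<in> U \<longrightarrow> finite (Some ` T - U))"

lemma istopology_alex_open: fixes T :: "'b set" shows "istopology (alex_open T)"
proof -
  have 1: "finite (Some ` T - (S \<inter> U))"
    if "finite (Some ` T - S)" "finite (Some ` T - U)" for S U :: "'b option set"
  proof -
    have "Some ` T - (S \<inter> U) = (Some ` T - S) \<union> (Some ` T - U)" by blast
    then show ?thesis using that by simp
  qed
  have 2: "finite (Some ` T - \<Union>K)" if "S \<in> K" "finite (Some ` T - S)"
    for S :: "'b option set" and K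
    by (rule finite_subset[OF _ that(2)]) (use that(1) in blast)
  show ?thesis
    unfolding istopology_def alex_open_def
    using 1 2 by (auto; blast)
qed

definition alexandroff_discrete :: "'b set \<Rightarrow> 'b option topology" where
  "alexandroff_discrete T = topology (alex_open T)"

lemma openin_alexandroff_discrete:
  "openin (alexandroff_discrete T) U \<longleftrightarrow> alex_open T U"
  by (simp add: alexandroff_discrete_def istopology_alex_open)

definition separately_continuous ::
  "'a topology \<Rightarrow> 'b topology \<Rightarrow> ('a \<Rightarrow> 'b \<Rightarrow> real) \<Rightarrow> bool" where
  "separately_continuous X Y f \<longleftrightarrow>
     (\<forall>y\<in>topspace Y. continuous_map X euclideanreal (\<lambda>x. f x y)) \<and>
     (\<forall>x\<in>topspace X. continuous_map Y euclideanreal (\<lambda>y. f x y))"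

definition wedge_f :: "'b topology \<Rightarrow> ('a \<Rightarrow> 'b \<Rightarrow> real) \<Rightarrow> 'a \<Rightarrow> ereal" where
  "wedge_f Y f x = (INF y\<in>topspace Y. ereal (f x y))"

definition vee_f :: "'b topology \<Rightarrow> ('a \<Rightarrow> 'b \<Rightarrow> real) \<Rightarrow> 'a \<Rightarrow> ereal" where
  "vee_f Y f x = (SUP y\<in>topspace Y. ereal (f x y))"

definition stable_Hahn_pair :: "'a topology \<Rightarrow> ('a \<Rightarrow> ereal) \<Rightarrow> ('a \<Rightarrow> ereal) \<Rightarrow> bool" where
  "stable_Hahn_pair X g h \<longleftrightarrow>
     (\<exists>u :: nat \<Rightarrow> 'a \<Rightarrow> ereal.
        (\<forall>n. continuous_map X euclidean (u n)) \<and>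
        (\<forall>x\<in>topspace X.
           (\<forall>n. g x \<le> u n x \<and> u n x \<le> h x) \<and>
           (\<exists>n. u n x = g x) \<and> (\<exists>n. u n x = h x)))"

end

theory Submission
  imports Defs
begin

lemma topspace_alex: "topspace (alexandroff_discrete T) = insert None (Some ` T)"
proof -
  have "openin (alexandroff_discrete T) (insert None (Some ` T))"
    by (simp add: openin_alexandroff_discrete alex_open_def)
  moreover have "\<And>U. openin (alexandroff_discrete T) U \<Longrightarrow> U \<subseteq> insert None (Some ` T)"
    by (simp add: openin_alexandroff_discrete alex_open_def)
  ultimately show ?thesis unfolding topspace_def by blast
qed

lemma compact_alex: "compact_space (alexandroff_discrete T)"
  unfolding compact_space_alt
proof (intro allI impI)
  fix \<U> assume H: "(\<forall>U\<in>\<U>. openin (alexandroff_discrete T) U) \<and> topspace (alexandroff_discrete T) \<subseteq> \<Union>\<U>"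
  then obtain U0 where U0: "U0 \<in> \<U>" "None \<in> U0" by (auto simp: topspace_alex)
  then have fin: "finite (Some ` T - U0)" using H by (auto simp: openin_alexandroff_discrete alex_open_def)
  have "\<forall>y\<in>Some ` T - U0. \<exists>U\<in>\<U>. y \<in> U" using H by (auto simp: topspace_alex)
  then obtain g where g: "\<And>y. y \<in> Some ` T - U0 \<Longrightarrow> g y \<in> \<U> \<and> y \<in> g y" by metis
  show "\<exists>\<F>. finite \<F> \<and> \<F> \<subseteq> \<U> \<and> topspace (alexandroff_discrete T) \<subseteq> \<Union>\<F>"
    apply (rule exI[of _ "insert U0 (g ` (Some ` T - U0))"])
    using fin U0 g by (auto simp: topspace_alex)
qed

lemma countable_diff:
  assumes c: "continuous_map (alexandroff_discrete T) euclideanreal g"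
  shows "countable {t\<in>T. g (Some t) \<noteq> g None}"
proof -
  have fin: "finite {t\<in>T. \<bar>g (Some t) - g None\<bar> \<ge> 1 / Suc k}" for k
  proof -
    let ?V = "{r. \<bar>r - g None\<bar> < 1 / Suc k}"
    have "open ?V"
    proof -
      have "?V = ball (g None) (1 / Suc k)" by (auto simp: dist_real_def)
      then show ?thesis by simp
    qed
    then have "openin (alexandroff_discrete T) {y \<in> topspace (alexandroff_discrete T). g y \<in> ?V}"
      using openin_continuous_map_preimage[OF c] by (simp only: open_openin)
    moreover have "None \<in> {y \<in> topspace (alexandroff_discrete T). g y \<in> ?V}"
      by (simp add: topspace_alex)
    ultimately have "finite (Some ` T - {y \<in> topspace (alexandroff_discrete T). g y \<in> ?V})"
      by (simp add: openin_alexandroff_discrete alex_open_def)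
    moreover have "Some ` {t\<in>T. \<bar>g (Some t) - g None\<bar> \<ge> 1 / Suc k} \<subseteq> Some ` T - {y \<in> topspace (alexandroff_discrete T). g y \<in> ?V}"
      by auto
    ultimately have "finite (Some ` {t\<in>T. \<bar>g (Some t) - g None\<bar> \<ge> 1 / Suc k})"
      using finite_subset by blast
    then show ?thesis using finite_imageD inj_Some inj_on_subset by (metis subset_UNIV)
  qed
  have "{t\<in>T. g (Some t) \<noteq> g None} \<subseteq> (\<Union>k. {t\<in>T. \<bar>g (Some t) - g None\<bar> \<ge> 1 / Suc k})"
  proof
    fix t assume "t \<in> {t\<in>T. g (Some t) \<noteq> g None}"
    then have t: "t \<in> T" "\<bar>g (Some t) - g None\<bar> > 0" by auto
    then obtain k where k: "1 / real (Suc k) < \<bar>g (Some t) - g None\<bar>"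
      using reals_Archimedean[OF t(2)] by (auto simp: inverse_eq_divide)
    show "t \<in> (\<Union>k. {t\<in>T. \<bar>g (Some t) - g None\<bar> \<ge> 1 / Suc k})"
      by (rule UN_I[of k]) (use t k in auto)
  qed
  moreover have "countable (\<Union>k. {t\<in>T. \<bar>g (Some t) - g None\<bar> \<ge> 1 / Suc k})"
    using fin by (intro countable_UN) (auto intro: countable_finite)
  ultimately show ?thesis using countable_subset by blast
qed

theorem proposition3p3:
  fixes X :: "'a topology" and T :: "'b set" and f :: "'a \<Rightarrow> 'b option \<Rightarrow> real"
  assumes "separable_space X"
    and "separately_continuous X (alexandroff_discrete T) f"
  shows "stable_Hahn_pair X (wedge_f (alexandroff_discrete T) f) (vee_f (alexandroff_discrete T) f)"
proof -
  let ?Y = "alexandroff_discrete T"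
  have cx: "\<And>y. y \<in> topspace ?Y \<Longrightarrow> continuous_map X euclideanreal (\<lambda>x. f x y)"
   and cy: "\<And>x. x \<in> topspace X \<Longrightarrow> continuous_map ?Y euclideanreal (\<lambda>y. f x y)"
    using assms(2) by (auto simp: separately_continuous_def)
  obtain C where C: "countable C" "C \<subseteq> topspace X" "X closure_of C = topspace X"
    using assms(1) unfolding separable_space_def by blast
  define T0 where "T0 = (\<Union>d\<in>C. {t\<in>T. f d (Some t) \<noteq> f d None})"
  have cd: "countable {t\<in>T. f d (Some t) \<noteq> f d None}" if "d \<in> C" for d
  proof -
    have "d \<in> topspace X" using that C(2) by blast
    then show ?thesis by (rule countable_diff[OF cy])
  qed
  have cT0: "countable T0" unfolding T0_def
    by (rule countable_UN[OF C(1) cd])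
  have eq: "f x (Some t) = f x None" if x: "x \<in> topspace X" and t: "t \<in> T" "t \<notin> T0" for x t
  proof -
    have "closedin X {x \<in> topspace X. f x (Some t) = f x None}"
      by (rule closedin_continuous_maps_eq[OF Hausdorff_space_euclidean cx cx]) (use t in \<open>auto simp: topspace_alex\<close>)
    moreover have "C \<subseteq> {x \<in> topspace X. f x (Some t) = f x None}"
      using C t unfolding T0_def by auto
    ultimately have "topspace X \<subseteq> {x \<in> topspace X. f x (Some t) = f x None}"
      using closure_of_minimal C(3) by metis
    then show ?thesis using x by auto
  qed
  define S where "S = insert None (Some ` T0)"
  have cS: "countable S" using cT0 by (simp add: S_def)
  have SY: "S \<subseteq> topspace ?Y" by (auto simp: S_def T0_def topspace_alex)
  define u where "u = (\<lambda>n x. ereal (f x (from_nat_into S n)))"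
  have fS: "from_nat_into S n \<in> S" for n
    by (rule from_nat_into) (simp add: S_def)
  have rep: "\<exists>n. u n x = ereal (f x y)" if x: "x \<in> topspace X" and y: "y \<in> topspace ?Y" for x y
  proof -
    obtain s where s: "s \<in> S" "f x s = f x y"
    proof (cases y)
      case None then show ?thesis using that by (auto simp: S_def)
    next
      case (Some t)
      then have tT: "t \<in> T" using y by (auto simp: topspace_alex)
      show ?thesis
      proof (cases "t \<in> T0")
        case True then show ?thesis using that Some by (auto simp: S_def)
      next
        case False then show ?thesis using that[of None] eq[OF x tT] Some by (auto simp: S_def)
      qed
    qed
    then obtain n where "from_nat_into S n = s" using from_nat_into_surj[OF cS] by blast
    then show ?thesis using s by (auto simp: u_def)
  qed
  show ?thesis unfolding stable_Hahn_pair_def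
  proof (rule exI[of _ u], intro conjI allI ballI)
    fix n
    have c1: "continuous_map X euclideanreal (\<lambda>x. f x (from_nat_into S n))"
      using cx fS SY by blast
    have c2: "continuous_map euclideanreal euclidean ereal"
      using continuous_on_ereal[OF continuous_on_id] by (simp add: id_def)
    have "continuous_map X euclidean (ereal \<circ> (\<lambda>x. f x (from_nat_into S n)))"
      by (rule continuous_map_compose[OF c1 c2])
    then show "continuous_map X euclidean (u n)"
      by (simp add: u_def o_def)
  next
    fix x n assume x: "x \<in> topspace X"
    have "from_nat_into S n \<in> topspace ?Y" using fS SY by blast
    then show "wedge_f ?Y f x \<le> u n x"
      unfolding wedge_f_def u_def by (rule INF_lower)
  next
    fix x n assume x: "x \<in> topspace X"
    have "from_nat_into S n \<in> topspace ?Y" using fS SY by blast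
    then show "u n x \<le> vee_f ?Y f x"
      unfolding vee_f_def u_def by (rule SUP_upper)
  next
    fix x assume x: "x \<in> topspace X"
    have K: "compact ((\<lambda>y. f x y) ` topspace ?Y)"
      using image_compactin[OF compact_alex[unfolded compact_space_def] cy[OF x]] by simp
    have ne: "(\<lambda>y. f x y) ` topspace ?Y \<noteq> {}" by (simp add: topspace_alex)
    obtain y1 where y1: "y1 \<in> topspace ?Y" "\<And>y. y \<in> topspace ?Y \<Longrightarrow> f x y1 \<le> f x y"
      using compact_attains_inf[OF K ne] by auto
    obtain y2 where y2: "y2 \<in> topspace ?Y" "\<And>y. y \<in> topspace ?Y \<Longrightarrow> f x y \<le> f x y2"
      using compact_attains_sup[OF K ne] by auto
    have w: "wedge_f ?Y f x = ereal (f x y1)"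
      unfolding wedge_f_def
      by (rule antisym) (auto intro!: INF_lower INF_greatest y1)
    have v: "vee_f ?Y f x = ereal (f x y2)"
      unfolding vee_f_def
      by (rule antisym) (auto intro!: SUP_upper SUP_least y2)
    show "\<exists>n. u n x = wedge_f ?Y f x" using rep[OF x y1(1)] w by simp
    show "\<exists>n. u n x = vee_f ?Y f x" using rep[OF x y2(1)] v by simp
  qed
qed

end
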